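(* Let $n\geqslant 3$, let $S$ be a caterpillar species tree with canonical label vector $(s_1,\dots,s_n)$, and let $k_s,k_\ell\in\{1,\dots,n\}$ with $k_s<k_\ell$ and $k_\ell\neq 2$. Let $G$ be the caterpillar gene tree obtained from $S$ by forward incrementation on positions $k_s,\dots,k_\ell$, i.e. with canonical label vector $(g_1,\dots,g_n)$ given by $g_{k_s}=s_{k_\ell}$, $g_k=s_{k-1}$ for $k_s<k\leqslant k_\ell$, and $g_k=s_k$ for $k\notin\{k_s,\dots,k_\ell\}$. Then the roadblock set $B_{G,S}$ consists of a triangle of lattice points on and below the diagonal, i.e. $B_{G,S}=\{(i,j): a\leqslant j\leqslant i\leqslant b\}$ for some integers $a\leqslant b$.
   Context: All trees are binary, rooted, leaf-labeled. A caterpillar tree with $n$ leaves is one in which some internal node is descended from all other internal nodes. Its canonical label vector $(x_1,\dots,x_n)$ has $x_1,x_2$ the labels of the two leaves of the cherry (unique internal node with two descendant leaves) and, for $3\leqslant i\leqslant n$, $x_i$ the label of the leaf separated from the root by $n-i+1$ edges; vectors differing only by swapping $x_1,x_2$ describe the same tree. For caterpillars $G,S$ with canonical vectors $\mathbf g,\mathbf s$, let $\sigma(x)$ be the index of label $x$ in $\mathbf s$, $F(j)=\max\{\sigma(g_1),\dots,\sigma(g_{j+1})\}-1$ for $1\leqslant j\leqslant n-1$, and define the roadblock set $B_{G,S}=\{(i,j)\in\mathbb Z^2:1\leqslant j\leqslant i\leqslant n-1,\ i<F(j)\}$. *)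

theory Defs
  imports Main
begin

text \<open>A caterpillar tree on n leaves is represented by its canonical label vector
  x : {1..n} -> labels (injective); entries outside {1..n} are irrelevant.\<close>

definition canon_vec :: "nat \<Rightarrow> (nat \<Rightarrow> 'a) \<Rightarrow> bool" where
  "canon_vec n x \<longleftrightarrow> inj_on x {1..n}"

definition label_index :: "nat \<Rightarrow> (nat \<Rightarrow> 'a) \<Rightarrow> 'a \<Rightarrow> nat" where
  "label_index n s x = (THE i. i \<in> {1..n} \<and> s i = x)"

definition Fmax :: "nat \<Rightarrow> (nat \<Rightarrow> 'a) \<Rightarrow> (nat \<Rightarrow> 'a) \<Rightarrow> nat \<Rightarrow> int" where
  "Fmax n g s j = int (Max ((\<lambda>k. label_index n s (g k)) ` {1..j+1})) - 1"

definition roadblock :: "nat \<Rightarrow> (nat \<Rightarrow> 'a) \<Rightarrow> (nat \<Rightarrow> 'a) \<Rightarrow> (int \<times> int) set" where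
  "roadblock n g s = {(i, j). 1 \<le> j \<and> j \<le> i \<and> i \<le> int n - 1 \<and> i < Fmax n g s (nat j)}"

definition fwd_incr :: "(nat \<Rightarrow> 'a) \<Rightarrow> nat \<Rightarrow> nat \<Rightarrow> nat \<Rightarrow> 'a" where
  "fwd_incr s ks kl k =
     (if k = ks then s kl else if ks < k \<and> k \<le> kl then s (k - 1) else s k)"

end

theory Submission
  imports Defs
begin

lemma li_s:
  assumes "canon_vec n s" "m \<in> {1..n}"
  shows "label_index n s (s m) = m"
  unfolding label_index_def
proof (rule the_equality)
  show "m \<in> {1..n} \<and> s m = s m" using assms by simp
next
  fix i assume "i \<in> {1..n} \<and> s i = s m"
  then show "i = m" using assms unfolding canon_vec_def inj_on_def by blast
qed

lemma li_g:
  assumes "canon_vec n s" "k \<in> {1..n}" "1 \<le> ks" "ks < kl" "kl \<le> n"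
  shows "label_index n s (fwd_incr s ks kl k) =
     (if k = ks then kl else if ks < k \<and> k \<le> kl then k - 1 else k)"
proof -
  have "k - 1 \<in> {1..n}" if "ks < k" using assms that by auto
  moreover have "kl \<in> {1..n}" using assms by auto
  ultimately show ?thesis using assms by (simp add: fwd_incr_def li_s)
qed

lemma Max_g:
  assumes "canon_vec n s" "1 \<le> ks" "ks < kl" "kl \<le> n" "j + 1 \<le> n"
  shows "Max ((\<lambda>k. label_index n s (fwd_incr s ks kl k)) ` {1..j+1}) =
     (if j + 1 < ks then j + 1 else max kl (j + 1))"
proof -
  have eq: "(\<lambda>k. label_index n s (fwd_incr s ks kl k)) ` {1..j+1} =
     (\<lambda>k. (if k = ks then kl else if ks < k \<and> k \<le> kl then k - 1 else k)) ` {1..j+1}"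
  proof (rule image_cong)
    fix k assume "k \<in> {1..j+1}"
    then have "k \<in> {1..n}" using assms by auto
    then show "label_index n s (fwd_incr s ks kl k) = (if k = ks then kl else if ks < k \<and> k \<le> kl then k - 1 else k)"
      using li_g[OF assms(1) _ assms(2,3,4)] by blast
  qed simp
  show ?thesis unfolding eq
  proof (rule Max_eqI)
    show "finite ((\<lambda>k. (if k = ks then kl else if ks < k \<and> k \<le> kl then k - 1 else k)) ` {1..j+1})" by simp
  next
    fix y assume "y \<in> (\<lambda>k. (if k = ks then kl else if ks < k \<and> k \<le> kl then k - 1 else k)) ` {1..j+1}"
    then show "y \<le> (if j + 1 < ks then j + 1 else max kl (j + 1))" by auto
  next
    show "(if j + 1 < ks then j + 1 else max kl (j + 1)) \<in> (\<lambda>k. (if k = ks then kl else if ks < k \<and> k \<le> kl then k - 1 else k)) ` {1..j+1}"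
    proof (cases "j + 1 < ks")
      case True then show ?thesis by (intro image_eqI[where x="j+1"]) auto
    next
      case False
      show ?thesis
      proof (cases "j + 1 \<le> kl")
        case True then show ?thesis using False assms by (intro image_eqI[where x="ks"]) auto
      next
        case f2: False then show ?thesis using False assms by (intro image_eqI[where x="j+1"]) auto
      qed
    qed
  qed
qed

theorem proposition8:
  fixes n ks kl :: nat and s :: "nat \<Rightarrow> 'a"
  assumes "n \<ge> 3"
    and "canon_vec n s"
    and "1 \<le> ks" and "ks < kl" and "kl \<le> n" and "kl \<noteq> 2"
  shows "\<exists>a b :: int. a \<le> b \<and>
           roadblock n (fwd_incr s ks kl) s = {(i, j). a \<le> j \<and> j \<le> i \<and> i \<le> b}"
proof (intro exI conjI)
  show "max 1 (int ks - 1) \<le> int kl - 2" using assms by auto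
  show "roadblock n (fwd_incr s ks kl) s = {(i, j). max 1 (int ks - 1) \<le> j \<and> j \<le> i \<and> i \<le> int kl - 2}"
  proof (intro set_eqI, clarify)
    fix i j :: int
    show "((i, j) \<in> roadblock n (fwd_incr s ks kl) s) =
          ((i, j) \<in> {(i, j). max 1 (int ks - 1) \<le> j \<and> j \<le> i \<and> i \<le> int kl - 2})"
    proof (cases "1 \<le> j \<and> j \<le> int n - 1")
      case True
      then have "nat j + 1 \<le> n" by auto
      have F: "Fmax n (fwd_incr s ks kl) s (nat j) =
           int (if nat j + 1 < ks then nat j + 1 else max kl (nat j + 1)) - 1"
        by (simp only: Fmax_def Max_g[OF assms(2,3,4,5) \<open>nat j + 1 \<le> n\<close>])
      have "(i, j) \<in> roadblock n (fwd_incr s ks kl) s \<longleftrightarrow>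
          j \<le> i \<and> i \<le> int n - 1 \<and> i < int (if nat j + 1 < ks then nat j + 1 else max kl (nat j + 1)) - 1"
        unfolding roadblock_def using True F by auto
      then show ?thesis using True assms by (auto split: if_splits)
    next
      case False
      have l: "(i, j) \<notin> roadblock n (fwd_incr s ks kl) s"
        unfolding roadblock_def using False by auto
      have r: "(i, j) \<notin> {(i, j). max 1 (int ks - 1) \<le> j \<and> j \<le> i \<and> i \<le> int kl - 2}"
        using False assms by auto
      show ?thesis using l r by blast
    qed
  qed
qed

end
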